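(* Let $s\ge1$ and $0\le k\le s$. Then $E(s,k)=\sum_{m=k}^{s}(-1)^{m+k}\binom{m}{k}O(s,m)$.
   Context: A $p$-string of length $s$ is a correctly matched string of $s$ pairs of parentheses; there are $C_s=\frac{1}{s+1}\binom{2s}{s}$ of them ($C_0=1$). Given $p$-strings $U$ (upper), $W$ (lower) of length $s$, the meander graph $\Gamma^1_{2s-1}$ is obtained by marking points $0,1,\dots,2s$ on the $x$-axis, taking the segment $[0,2s]$, joining points $a,b$ by an upper semicircle for each matched pair of $U$ at positions $a<b$ (positions $1,\dots,2s$), and points $a-1,b-1$ by a lower semicircle for each matched pair of $W$ at positions $a<b$; the vertices are $1,\dots,2s-1$. A pierced circle at position $i$ ($1\le i\le 2s-2$) is present if vertices $i,i+1$ are joined both by an upper and a lower semicircle. $E(s,k)$ is the number of pairs $(U,W)$ whose meander graph has exactly $k$ pierced circles. $O(s,k)=\binom{2s-k-1}{k}(C_{s-k})^2$, which equals the number of triples $(A,P,Q)$ where $A$ is a placement of $k$ pairwise vertex-disjoint pierced circles on the path graph with $2s-1$ vertices and $P,Q$ are $p$-strings of length $s-k$. *)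

theory Defs
  imports Main
begin

text \<open>A parenthesis string is a list of booleans: True = open, False = close.\<close>

definition depth :: "bool list \<Rightarrow> int" where
  "depth xs = sum_list (map (\<lambda>b. if b then 1 else -1) xs)"

definition balanced :: "bool list \<Rightarrow> bool" where
  "balanced xs \<longleftrightarrow> depth xs = 0 \<and> (\<forall>n\<le>length xs. depth (take n xs) \<ge> 0)"

definition pstring :: "nat \<Rightarrow> bool list \<Rightarrow> bool" where
  "pstring s xs \<longleftrightarrow> length xs = 2 * s \<and> balanced xs"

text \<open>Positions a < b (1-based) form a matched pair: '(' at a, ')' at b,
  and the substring strictly between them is balanced.\<close>
definition matched :: "bool list \<Rightarrow> nat \<Rightarrow> nat \<Rightarrow> bool" where
  "matched xs a b \<longleftrightarrow> 1 \<le> a \<and> a < b \<and> b \<le> length xs \<and> xs ! (a - 1) \<and> \<not> xs ! (b - 1)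
     \<and> balanced (take (b - 1 - a) (drop a xs))"

text \<open>Upper semicircle joining points a, b: matched pair (a,b) of U.
  Lower semicircle joining points a, b: matched pair (a+1,b+1) of W.\<close>
definition upper_arc :: "bool list \<Rightarrow> nat \<Rightarrow> nat \<Rightarrow> bool" where
  "upper_arc U a b \<longleftrightarrow> matched U a b"

definition lower_arc :: "bool list \<Rightarrow> nat \<Rightarrow> nat \<Rightarrow> bool" where
  "lower_arc W a b \<longleftrightarrow> matched W (a + 1) (b + 1)"

definition pierced :: "bool list \<Rightarrow> bool list \<Rightarrow> nat \<Rightarrow> bool" where
  "pierced U W i \<longleftrightarrow> upper_arc U i (i + 1) \<and> lower_arc W i (i + 1)"

definition num_pierced :: "nat \<Rightarrow> bool list \<Rightarrow> bool list \<Rightarrow> nat" where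
  "num_pierced s U W = card {i. 1 \<le> i \<and> i \<le> 2 * s - 2 \<and> pierced U W i}"

definition Enum :: "nat \<Rightarrow> nat \<Rightarrow> nat" where
  "Enum s k = card {(U, W). pstring s U \<and> pstring s W \<and> num_pierced s U W = k}"

definition catalan :: "nat \<Rightarrow> nat" where
  "catalan n = (2 * n choose n) div (n + 1)"

definition Onum :: "nat \<Rightarrow> nat \<Rightarrow> nat" where
  "Onum s k = (2 * s - k - 1 choose k) * (catalan (s - k))^2"

end

theory Submission
  imports Defs
begin

definition dd :: "bool \<Rightarrow> int" where "dd b = (if b then 1 else -1)"

fun wk :: "int \<Rightarrow> int \<Rightarrow> bool list \<Rightarrow> bool" where
  "wk h t [] \<longleftrightarrow> (h \<ge> 0 \<and> h = t)"
| "wk h t (a # x) \<longleftrightarrow> (h \<ge> 0 \<and> wk (h + dd a) t x)"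

lemma wk_ge: "wk h t x \<Longrightarrow> h \<ge> 0"
  by (cases x) auto

lemma wk_t_ge: "wk h t x \<Longrightarrow> t \<ge> 0"
  by (induction x arbitrary: h) auto

lemma depth_Cons: "depth (a # x) = dd a + depth x"
  by (simp add: depth_def dd_def)

lemma depth_Nil: "depth [] = 0"
  by (simp add: depth_def)

lemma wk_iff: "wk h t x \<longleftrightarrow> (\<forall>m\<le>length x. h + depth (take m x) \<ge> 0) \<and> h + depth x = t"
proof (induction x arbitrary: h)
  case Nil
  then show ?case by (auto simp: depth_Nil)
next
  case (Cons a x)
  have "(\<forall>m\<le>length (a#x). h + depth (take m (a#x)) \<ge> 0) \<longleftrightarrow>
        h \<ge> 0 \<and> (\<forall>m\<le>length x. (h + dd a) + depth (take m x) \<ge> 0)"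
  proof
    assume H: "\<forall>m\<le>length (a#x). h + depth (take m (a#x)) \<ge> 0"
    have "h \<ge> 0" using H[rule_format, of 0] by (simp add: depth_Nil)
    moreover have "\<forall>m\<le>length x. (h + dd a) + depth (take m x) \<ge> 0"
    proof (intro allI impI)
      fix m assume "m \<le> length x"
      then have "h + depth (take (Suc m) (a#x)) \<ge> 0" using H by auto
      then show "(h + dd a) + depth (take m x) \<ge> 0" by (simp add: depth_Cons)
    qed
    ultimately show "h \<ge> 0 \<and> (\<forall>m\<le>length x. (h + dd a) + depth (take m x) \<ge> 0)" by simp
  next
    assume H: "h \<ge> 0 \<and> (\<forall>m\<le>length x. (h + dd a) + depth (take m x) \<ge> 0)"
    show "\<forall>m\<le>length (a#x). h + depth (take m (a#x)) \<ge> 0"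
    proof (intro allI impI)
      fix m assume m: "m \<le> length (a#x)"
      show "h + depth (take m (a#x)) \<ge> 0"
      proof (cases m)
        case 0 then show ?thesis using H by (simp add: depth_Nil)
      next
        case (Suc m') then show ?thesis using H m by (auto simp: depth_Cons add.assoc)
      qed
    qed
  qed
  then show ?case using Cons.IH[of "h + dd a"] by (auto simp: depth_Cons algebra_simps)
qed

lemma balanced_wk: "balanced x \<longleftrightarrow> wk 0 0 x"
  by (auto simp: balanced_def wk_iff)

lemma pstring_wk: "pstring s x \<longleftrightarrow> length x = 2 * s \<and> wk 0 0 x"
  by (simp add: pstring_def balanced_wk)

lemma wk_snoc: "wk h t (x @ [a]) \<longleftrightarrow> wk h (t - dd a) x \<and> t \<ge> 0"
  by (induction x arbitrary: h) (auto simp: dd_def)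

lemma wk_len: "wk h t x \<Longrightarrow> h - t \<le> int (length x)"
proof (induction x arbitrary: h)
  case (Cons a x)
  then have "h + dd a - t \<le> int (length x)" by simp
  then show ?case by (simp add: dd_def split: if_splits)
qed simp

definition Wk :: "nat \<Rightarrow> nat \<Rightarrow> bool list set" where
  "Wk n h = {x. length x = n \<and> wk (int h) 0 x}"

lemma finite_Wk: "finite (Wk n h)"
proof -
  have "Wk n h \<subseteq> {x. set x \<subseteq> UNIV \<and> length x = n}" unfolding Wk_def by auto
  moreover have "finite {x::bool list. set x \<subseteq> UNIV \<and> length x = n}"
    by (rule finite_lists_length_eq) simp
  ultimately show ?thesis by (rule finite_subset)
qed

lemma Wk_Suc_0: "Wk (Suc n) 0 = (Cons True) ` Wk n 1"
proof -
  have "Wk (Suc n) 0 = {x. \<exists>y. x = True # y \<and> y \<in> Wk n 1}"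
  proof (rule set_eqI, rule iffI)
    fix x assume "x \<in> Wk (Suc n) 0"
    then obtain a y where x: "x = a # y" "length y = n" "wk (dd a) 0 y" unfolding Wk_def
      by (cases x) auto
    then have "a" using wk_ge[of "dd a" 0 y] by (auto simp: dd_def split: if_splits)
    then show "x \<in> {x. \<exists>y. x = True # y \<and> y \<in> Wk n 1}" using x by (auto simp: Wk_def dd_def)
  qed (auto simp: Wk_def dd_def)
  then show ?thesis by auto
qed

lemma Wk_Suc_Suc: "Wk (Suc n) (Suc h) = (Cons True) ` Wk n (h + 2) \<union> (Cons False) ` Wk n h"
proof (rule set_eqI, rule iffI)
  fix x assume "x \<in> Wk (Suc n) (Suc h)"
  then obtain a y where x: "x = a # y" "length y = n" "wk (int (Suc h) + dd a) 0 y" unfolding Wk_def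
    by (cases x) auto
  show "x \<in> (Cons True) ` Wk n (h + 2) \<union> (Cons False) ` Wk n h"
  proof (cases a)
    case True
    then have "y \<in> Wk n (h+2)" using x by (auto simp: Wk_def dd_def add.assoc)
    then show ?thesis using x True by auto
  next
    case False
    then have "y \<in> Wk n h" using x by (auto simp: Wk_def dd_def)
    then show ?thesis using x False by auto
  qed
next
  fix x assume "x \<in> (Cons True) ` Wk n (h + 2) \<union> (Cons False) ` Wk n h"
  then show "x \<in> Wk (Suc n) (Suc h)" by (auto simp: Wk_def dd_def add.assoc)
qed

lemma card_Wk_Suc_0: "card (Wk (Suc n) 0) = card (Wk n 1)"
  by (simp add: Wk_Suc_0 card_image)

lemma card_Wk_Suc_Suc: "card (Wk (Suc n) (Suc h)) = card (Wk n (h+2)) + card (Wk n h)"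
proof -
  have "card ((Cons True) ` Wk n (h + 2) \<union> (Cons False) ` Wk n h)
        = card ((Cons True) ` Wk n (h + 2)) + card ((Cons False) ` Wk n h)"
    by (rule card_Un_disjoint) (auto simp: finite_Wk)
  then show ?thesis by (simp add: Wk_Suc_Suc card_image)
qed

lemma Wk_small: "n < h \<Longrightarrow> Wk n h = {}"
  unfolding Wk_def using wk_len by fastforce

lemma card_Wk_diag: "card (Wk h h) = 1"
proof (induction h)
  case 0
  have "Wk 0 0 = {[]}" by (auto simp: Wk_def)
  then show ?case by simp
next
  case (Suc h)
  then show ?case by (simp add: card_Wk_Suc_Suc Wk_small)
qed

lemma ballot: "card (Wk (2*u + 2 + h) h) + (2*u+2+h choose u) = (2*u+2+h choose Suc u)"
proof (induction u arbitrary: h)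
  case 0
  show ?case
  proof (induction h)
    case 0
    have "card (Wk 2 0) = 1" using card_Wk_Suc_0[of 1] card_Wk_diag[of 1]
      by (simp add: numeral_2_eq_2)
    then show ?case by (simp add: numeral_2_eq_2)
  next
    case (Suc h)
    have "card (Wk (Suc (h+2)) (Suc h)) = card (Wk (h+2) (h+2)) + card (Wk (h+2) h)"
      by (rule card_Wk_Suc_Suc)
    then show ?case using Suc card_Wk_diag[of "h+2"] by simp
  qed
next
  case (Suc u)
  note outer = Suc.IH
  show ?case
  proof (induction h)
    case 0
    let ?N = "2*u+3"
    have f: "card (Wk (2*u+4) 0) = card (Wk ?N 1)"
      using card_Wk_Suc_0[of ?N] by (simp add: numeral_eq_Suc)
    have ih: "card (Wk ?N 1) + (?N choose u) = (?N choose Suc u)"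
      using outer[of 1] by (simp add: numeral_eq_Suc)
    have sym: "(?N choose Suc (Suc u)) = (?N choose Suc u)"
      using binomial_symmetric[of "Suc u" ?N] by simp
    have p1: "(Suc ?N choose Suc (Suc u)) = (?N choose Suc u) + (?N choose Suc (Suc u))"
      by (rule binomial_Suc_Suc)
    have p2: "(Suc ?N choose Suc u) = (?N choose u) + (?N choose Suc u)"
      by (rule binomial_Suc_Suc)
    have e: "2 * Suc u + 2 + 0 = Suc ?N" by simp
    show ?case unfolding e using f ih sym p1 p2
      by (simp add: numeral_eq_Suc algebra_simps)
  next
    case (Suc h)
    let ?N = "2*u+4+h"
    have r: "card (Wk (Suc ?N) (Suc h)) = card (Wk ?N (h+2)) + card (Wk ?N h)"
      by (rule card_Wk_Suc_Suc)
    have i1: "card (Wk ?N (h+2)) + (?N choose u) = (?N choose Suc u)"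
    proof -
      have e: "2*u+2+(h+2) = ?N" by simp
      show ?thesis using outer[of "h+2"] unfolding e by simp
    qed
    have i2: "card (Wk ?N h) + (?N choose Suc u) = (?N choose Suc (Suc u))"
    proof -
      have e: "2 * Suc u + 2 + h = ?N" by simp
      show ?thesis using Suc.IH unfolding e by simp
    qed
    have p1: "(Suc ?N choose Suc u) = (?N choose u) + (?N choose Suc u)" by (rule binomial_Suc_Suc)
    have p2: "(Suc ?N choose Suc (Suc u)) = (?N choose Suc u) + (?N choose Suc (Suc u))" by (rule binomial_Suc_Suc)
    have e: "2 * Suc u + 2 + Suc h = Suc ?N" by simp
    show ?case unfolding e using r i1 i2 p1 p2 by simp
  qed
qed

lemma card_Wk_catalan: "card (Wk (2*n) 0) = catalan n"
proof (cases n)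
  case 0
  have "Wk 0 0 = {[]}" by (auto simp: Wk_def)
  then show ?thesis using 0 by (simp add: catalan_def)
next
  case (Suc u)
  let ?N = "2*u+2"
  have b: "card (Wk ?N 0) + (?N choose u) = (?N choose Suc u)"
    using ballot[of u 0] by simp
  have a1: "Suc u * (?N choose Suc u) = ?N * ((?N - 1) choose u)" by (rule binomial_absorption)
  have a2: "(?N - u) * (?N choose u) = ?N * ((?N - 1) choose u)" by (rule binomial_absorb_comp)
  have e: "?N - u = u + 2" by simp
  have k: "(?N choose u) * (u+2) = (?N choose Suc u) * (u+1)" using a1 a2 e by (simp add: algebra_simps)
  have "card (Wk ?N 0) * (u+2) = (?N choose Suc u)"
  proof -
    have "card (Wk ?N 0) * (u+2) + (?N choose u) * (u+2) = (?N choose Suc u) * (u+2)"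
      using b by (metis add_mult_distrib)
    then show ?thesis using k by (simp add: algebra_simps)
  qed
  moreover have gen: "\<And>c X::nat. c * (u+2) = X \<Longrightarrow> c = X div (u+2)"
  proof -
    fix c X :: nat assume h: "c * (u+2) = X"
    have "c * (u+2) div (u+2) = c" by (rule nonzero_mult_div_cancel_right) simp
    then show "c = X div (u+2)" using h by metis
  qed
  ultimately have "card (Wk ?N 0) = (?N choose Suc u) div (u+2)" by blast
  then show ?thesis using Suc by (simp add: catalan_def)
qed

lemma card_pstring: "card {x. pstring n x} = catalan n"
proof -
  have "{x. pstring n x} = Wk (2*n) 0" by (auto simp: pstring_wk Wk_def)
  then show ?thesis by (simp add: card_Wk_catalan)
qed

lemma finite_pstring: "finite {x. pstring n x}"
proof -
  have "{x. pstring n x} = Wk (2*n) 0" by (auto simp: pstring_wk Wk_def)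
  then show ?thesis by (simp add: finite_Wk)
qed

type_synonym col = "bool \<times> bool"

definition c1 :: col where "c1 = (True, True)"
definition c2 :: col where "c2 = (False, False)"

lemma c12: "c1 \<noteq> c2" "c2 \<noteq> c1" by (auto simp: c1_def c2_def)

fun ex :: "col option list \<Rightarrow> col list" where
  "ex [] = []"
| "ex (None # v) = c1 # c2 # ex v"
| "ex (Some a # v) = a # ex v"

fun er :: "col option list \<Rightarrow> col list" where
  "er [] = []"
| "er (None # v) = er v"
| "er (Some a # v) = a # er v"

fun nn :: "col option list \<Rightarrow> nat" where
  "nn [] = 0"
| "nn (None # v) = Suc (nn v)"
| "nn (Some a # v) = nn v"

fun occn :: "col list \<Rightarrow> nat" where
  "occn (a # b # w) = (if a = c1 \<and> b = c2 then 1 else 0) + occn (b # w)"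
| "occn _ = 0"

lemma occn_c2: "occn (c2 # w) = occn w"
  by (cases w) (auto simp: c12)

lemma len_ex: "length (ex v) = length (er v) + 2 * nn v"
  by (induction v rule: ex.induct) auto

lemma len_er: "length v = length (er v) + nn v"
  by (induction v rule: er.induct) auto

lemma ex_Nil: "ex v = [] \<longleftrightarrow> v = []"
  by (cases v rule: ex.cases) auto

lemma ex_Cons: "ex v = a # w \<longleftrightarrow> (\<exists>v'. v = Some a # v' \<and> ex v' = w) \<or> (\<exists>v'. v = None # v' \<and> a = c1 \<and> w = c2 # ex v')"
  by (cases v rule: ex.cases) auto

lemma ex_c2: "ex v = c2 # w \<longleftrightarrow> (\<exists>v'. v = Some c2 # v' \<and> ex v' = w)"
  using c12 by (auto simp: ex_Cons)

lemma finite_ex: "finite {v. ex v = w \<and> P v}"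
proof -
  have "{v. ex v = w \<and> P v} \<subseteq> {v. set v \<subseteq> UNIV \<and> length v \<le> length w}"
    using len_ex len_er by fastforce
  moreover have "finite {v::col option list. set v \<subseteq> UNIV \<and> length v \<le> length w}"
    by (rule finite_lists_length_le) simp
  ultimately show ?thesis by (rule finite_subset)
qed

lemma finite_er: "finite {v. er v = u \<and> nn v = m}"
proof -
  have "{v. er v = u \<and> nn v = m} \<subseteq> {v. set v \<subseteq> UNIV \<and> length v = length u + m}"
    using len_er by fastforce
  moreover have "finite {v::col option list. set v \<subseteq> UNIV \<and> length v = length u + m}"
    by (rule finite_lists_length_eq) simp
  ultimately show ?thesis by (rule finite_subset)
qed

definition S :: "col list \<Rightarrow> nat \<Rightarrow> col option list set" where
  "S w m = {v. ex v = w \<and> nn v = m}"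

lemma finite_S: "finite (S w m)" unfolding S_def by (rule finite_ex)

lemma S_Nil: "S [] m = (if m = 0 then {[]} else {})"
  by (auto simp: S_def ex_Nil)

lemma S_c2: "S (c2 # w) m = Cons (Some c2) ` S w m"
  by (auto simp: S_def ex_c2)

lemma S_Cons: "S (a # w) m = Cons (Some a) ` S w m \<union>
   (if a = c1 \<and> (\<exists>w2. w = c2 # w2) \<and> m > 0 then Cons None ` S (tl w) (m - 1) else {})"
proof (rule set_eqI)
  fix v
  show "v \<in> S (a # w) m \<longleftrightarrow> v \<in> Cons (Some a) ` S w m \<union>
   (if a = c1 \<and> (\<exists>w2. w = c2 # w2) \<and> m > 0 then Cons None ` S (tl w) (m - 1) else {})"
    by (cases v rule: ex.cases) (auto simp: S_def)
qed

lemma card_S: "card (S w m) = occn w choose m"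
proof (induction "length w" arbitrary: w m rule: less_induct)
  case less
  show ?case
  proof (cases w)
    case Nil
    then show ?thesis by (simp add: S_Nil)
  next
    case (Cons a w1)
    show ?thesis
    proof (cases "a = c1 \<and> (\<exists>w2. w1 = c2 # w2)")
      case True
      then obtain w2 where a: "a = c1" and w1: "w1 = c2 # w2" by auto
      have ih1: "card (S w2 k) = occn w2 choose k" for k
        using less[of w2] Cons w1 by simp
      have s1: "card (S w1 m) = occn w2 choose m"
        using ih1 by (simp add: w1 S_c2 card_image)
      have o: "occn w = Suc (occn w2)" using Cons a w1 by (simp add: occn_c2 c12)
      show ?thesis
      proof (cases m)
        case 0
        have "S w m = Cons (Some a) ` S w1 m"
          using Cons 0 by (simp add: S_Cons)
        then show ?thesis using s1 o 0 by (simp add: card_image)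
      next
        case (Suc m')
        have "S w m = Cons (Some a) ` S w1 m \<union> Cons None ` S w2 m'"
          using Cons a w1 Suc by (simp add: S_Cons)
        moreover have "card (Cons (Some a) ` S w1 m \<union> Cons None ` S w2 m')
            = card (Cons (Some a) ` S w1 m) + card (Cons None ` S w2 m')"
          by (rule card_Un_disjoint) (auto simp: finite_S)
        ultimately show ?thesis using s1 ih1[of m'] o Suc by (simp add: card_image)
      qed
    next
      case False
      have nc: "\<not> (a = c1 \<and> (\<exists>w2. w1 = c2 # w2) \<and> m > 0)" using False by blast
      have "S w m = Cons (Some a) ` S w1 m \<union> {}"
        unfolding Cons S_Cons if_not_P[OF nc] ..
      then have "S w m = Cons (Some a) ` S w1 m" by simp
      moreover have "occn w = occn w1"
        using Cons False by (cases w1) auto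
      ultimately show ?thesis using less[of w1] Cons by (simp add: card_image)
    qed
  qed
qed

definition T :: "col list \<Rightarrow> nat \<Rightarrow> col option list set" where
  "T u m = {v. er v = u \<and> nn v = m}"

lemma er_Nil: "er v = [] \<Longrightarrow> v = replicate (nn v) None"
  by (induction v rule: er.induct) auto

lemma T_Nil: "T [] m = {replicate m None}"
proof -
  have "er (replicate m None) = [] \<and> nn (replicate m None) = m" by (induction m) auto
  then show ?thesis using er_Nil by (auto simp: T_def)
qed

lemma T_Cons: "T (a # u) m = Cons (Some a) ` T u m \<union>
   (if m > 0 then Cons None ` T (a # u) (m - 1) else {})"
proof (rule set_eqI)
  fix v
  show "v \<in> T (a # u) m \<longleftrightarrow> v \<in> Cons (Some a) ` T u m \<union>
   (if m > 0 then Cons None ` T (a # u) (m - 1) else {})"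
    by (cases v rule: er.cases) (auto simp: T_def)
qed

lemma card_T: "card (T u m) = (length u + m) choose m"
proof (induction u arbitrary: m)
  case Nil
  then show ?case by (simp add: T_Nil)
next
  case (Cons a u)
  show ?case
  proof (induction m)
    case 0
    have "T (a # u) 0 = Cons (Some a) ` T u 0"
      by (simp add: T_Cons)
    then show ?case using Cons.IH[of 0] by (simp add: card_image)
  next
    case (Suc m)
    have "T (a # u) (Suc m) = Cons (Some a) ` T u (Suc m) \<union> Cons None ` T (a # u) m"
      by (simp add: T_Cons)
    moreover have "card (Cons (Some a) ` T u (Suc m) \<union> Cons None ` T (a # u) m)
        = card (Cons (Some a) ` T u (Suc m)) + card (Cons None ` T (a # u) m)"
      by (rule card_Un_disjoint) (auto simp: T_def finite_er)
    ultimately show ?case using Suc.IH Cons.IH[of "Suc m"] by (simp add: card_image)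
  qed
qed

lemma wk_ex_fst: "wk h t (map fst (ex v)) \<longleftrightarrow> wk h t (map fst (er v))"
proof (induction v arbitrary: h rule: ex.induct)
  case (2 v)
  then show ?case using wk_ge[of h t "map fst (ex v)"] by (auto simp: c1_def c2_def dd_def)
qed auto

lemma wk_ex_snd: "wk h t (map snd (ex v)) \<longleftrightarrow> wk h t (map snd (er v))"
proof (induction v arbitrary: h rule: ex.induct)
  case (2 v)
  then show ?case using wk_ge[of h t "map snd (ex v)"] by (auto simp: c1_def c2_def dd_def)
qed auto

definition Q :: "col list \<Rightarrow> bool" where
  "Q z \<longleftrightarrow> wk 0 1 (map fst z) \<and> wk 1 0 (map snd z)"

definition G :: "nat \<Rightarrow> col list set" where
  "G n = {z. length z = n \<and> Q z}"

lemma finite_G: "finite (G n)"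
proof -
  have "G n \<subseteq> {z. set z \<subseteq> UNIV \<and> length z = n}" unfolding G_def by auto
  moreover have "finite {z::col list. set z \<subseteq> UNIV \<and> length z = n}"
    by (rule finite_lists_length_eq) simp
  ultimately show ?thesis by (rule finite_subset)
qed

lemma Q_ex: "Q (ex v) \<longleftrightarrow> Q (er v)"
  by (simp add: Q_def wk_ex_fst wk_ex_snd)

lemma N_lemma:
  assumes "2 * m \<le> n"
  shows "(\<Sum>w\<in>G n. occn w choose m) = card (G (n - 2*m)) * ((n - m) choose m)"
proof -
  have "(\<Sum>w\<in>G n. occn w choose m) = (\<Sum>w\<in>G n. card (S w m))"
    by (simp add: card_S)
  also have "\<dots> = card (\<Union>w\<in>G n. S w m)"
    by (rule card_UN_disjoint[symmetric]) (auto simp: finite_G finite_ex S_def)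
  also have "(\<Union>w\<in>G n. S w m) = (\<Union>u\<in>G (n - 2*m). T u m)"
  proof (rule set_eqI)
    fix v
    have "v \<in> (\<Union>w\<in>G n. S w m) \<longleftrightarrow> length (ex v) = n \<and> Q (ex v) \<and> nn v = m"
      by (auto simp: S_def G_def)
    also have "\<dots> \<longleftrightarrow> length (er v) = n - 2*m \<and> Q (er v) \<and> nn v = m"
      using assms by (auto simp: len_ex Q_ex)
    also have "\<dots> \<longleftrightarrow> v \<in> (\<Union>u\<in>G (n - 2*m). T u m)"
      by (auto simp: T_def G_def)
    finally show "v \<in> (\<Union>w\<in>G n. S w m) \<longleftrightarrow> v \<in> (\<Union>u\<in>G (n - 2*m). T u m)" .
  qed
  also have "card (\<Union>u\<in>G (n - 2*m). T u m) = (\<Sum>u\<in>G (n - 2*m). card (T u m))"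
    by (rule card_UN_disjoint) (auto simp: finite_G finite_er T_def)
  also have "\<dots> = (\<Sum>u\<in>G (n - 2*m). (n - m) choose m)"
  proof (rule sum.cong)
    fix u assume "u \<in> G (n - 2*m)"
    then have "length u + m = n - m" using assms by (simp add: G_def)
    then show "card (T u m) = (n - m) choose m" by (simp add: card_T)
  qed simp
  finally show ?thesis by simp
qed

definition occset :: "col list \<Rightarrow> nat set" where
  "occset w = {j. Suc j < length w \<and> w ! j = c1 \<and> w ! Suc j = c2}"

lemma card_occset: "card (occset w) = occn w"
proof (induction w rule: occn.induct)
  case (1 a b w)
  have e: "occset (a # b # w) = (if a = c1 \<and> b = c2 then {0} else {}) \<union> Suc ` occset (b # w)"
  proof (rule set_eqI)
    fix j show "j \<in> occset (a # b # w) \<longleftrightarrow> j \<in> (if a = c1 \<and> b = c2 then {0} else {}) \<union> Suc ` occset (b # w)"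
      by (cases j) (auto simp: occset_def)
  qed
  have f: "finite (occset (b # w))"
    by (rule finite_subset[of _ "{..<length (b # w)}"]) (auto simp: occset_def)
  have "card ((if a = c1 \<and> b = c2 then {0} else {}) \<union> Suc ` occset (b # w))
      = card (if a = c1 \<and> b = c2 then {0::nat} else {}) + card (Suc ` occset (b # w))"
    by (rule card_Un_disjoint) (use f in auto)
  then show ?case using 1 e by (simp add: card_image)
next
  case "2_1" then show ?case by (simp add: occset_def)
next
  case ("2_2" v) then show ?case by (simp add: occset_def)
qed

lemma occn_bound: "2 * occn w \<le> length w"
proof (induction "length w" arbitrary: w rule: less_induct)
  case less
  show ?case
  proof (cases w)
    case Nil then show ?thesis by simp
  next
    case (Cons a w1)
    show ?thesis
    proof (cases w1)
      case Nil then show ?thesis using Cons by simp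
    next
      case (Cons b w2)
      show ?thesis
      proof (cases "a = c1 \<and> b = c2")
        case True
        then have "occn w = Suc (occn w2)" using Cons \<open>w = a # w1\<close> by (simp add: occn_c2)
        moreover have "2 * occn w2 \<le> length w2" using less Cons \<open>w = a # w1\<close> by simp
        ultimately show ?thesis using Cons \<open>w = a # w1\<close> by simp
      next
        case False
        then have "occn w = occn w1" using Cons \<open>w = a # w1\<close> by simp
        moreover have "2 * occn w1 \<le> length w1" using less[of w1] Cons \<open>w = a # w1\<close> by simp
        ultimately show ?thesis using Cons \<open>w = a # w1\<close> by simp
      qed
    qed
  qed
qed

definition Phi :: "bool list \<times> bool list \<Rightarrow> col list" where
  "Phi p = zip (butlast (fst p)) (tl (snd p))"

definition Psi :: "col list \<Rightarrow> bool list \<times> bool list" where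
  "Psi z = (map fst z @ [False], True # map snd z)"

definition P2 :: "nat \<Rightarrow> (bool list \<times> bool list) set" where
  "P2 s = {(U, W). pstring s U \<and> pstring s W}"

lemma pstring_U:
  assumes "pstring s U" "1 \<le> s"
  shows "U = butlast U @ [False]" "wk 0 1 (butlast U)" "length (butlast U) = 2*s - 1"
proof -
  have ne: "U \<noteq> []" using assms by (auto simp: pstring_wk)
  then have U: "U = butlast U @ [last U]" by simp
  have w: "wk 0 0 U" using assms by (simp add: pstring_wk)
  then have w2: "wk 0 (0 - dd (last U)) (butlast U)" using U wk_snoc by metis
  then have "\<not> last U" using wk_t_ge by (fastforce simp: dd_def)
  then show "U = butlast U @ [False]" using U by simp
  show "wk 0 1 (butlast U)" using w2 \<open>\<not> last U\<close> by (simp add: dd_def)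
  show "length (butlast U) = 2*s - 1" using assms by (simp add: pstring_wk)
qed

lemma pstring_W:
  assumes "pstring s W" "1 \<le> s"
  shows "W = True # tl W" "wk 1 0 (tl W)" "length (tl W) = 2*s - 1"
proof -
  have ne: "W \<noteq> []" using assms by (auto simp: pstring_wk)
  then have W: "W = hd W # tl W" by simp
  have w: "wk 0 0 W" using assms by (simp add: pstring_wk)
  then have w2: "wk (dd (hd W)) 0 (tl W)" using W by (metis add_0 wk.simps(2))
  then have "hd W" using wk_ge by (fastforce simp: dd_def)
  then show "W = True # tl W" using W by simp
  show "wk 1 0 (tl W)" using w2 \<open>hd W\<close> by (simp add: dd_def)
  show "length (tl W) = 2*s - 1" using assms by (simp add: pstring_wk)
qed

lemma bij_Phi:
  assumes "1 \<le> s"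
  shows "bij_betw Phi (P2 s) (G (2*s - 1))"
proof (rule bij_betw_byWitness[where f' = Psi])
  show "\<forall>p\<in>P2 s. Psi (Phi p) = p"
  proof
    fix p assume "p \<in> P2 s"
    then obtain U W where p: "p = (U, W)" "pstring s U" "pstring s W" by (auto simp: P2_def)
    show "Psi (Phi p) = p"
      using pstring_U[OF p(2) assms] pstring_W[OF p(3) assms] p(1)
      by (simp add: Psi_def Phi_def)
  qed
  show "\<forall>z\<in>G (2*s - 1). Phi (Psi z) = z"
    by (simp add: Psi_def Phi_def zip_map_fst_snd)
  show "Phi ` P2 s \<subseteq> G (2*s - 1)"
  proof
    fix z assume "z \<in> Phi ` P2 s"
    then obtain U W where p: "z = Phi (U, W)" "pstring s U" "pstring s W" by (auto simp: P2_def)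
    show "z \<in> G (2*s - 1)"
      using pstring_U[OF p(2) assms] pstring_W[OF p(3) assms] p(1)
      by (simp add: Phi_def G_def Q_def)
  qed
  show "Psi ` G (2*s - 1) \<subseteq> P2 s"
  proof
    fix p assume "p \<in> Psi ` G (2*s - 1)"
    then obtain z where z: "p = Psi z" "z \<in> G (2*s - 1)" by auto
    have "wk 0 0 (map fst z @ [False])" using z(2) by (simp add: G_def Q_def wk_snoc dd_def)
    moreover have "wk 0 0 (True # map snd z)" using z(2) by (simp add: G_def Q_def dd_def)
    ultimately show "p \<in> P2 s" using z assms by (auto simp: P2_def Psi_def pstring_wk G_def)
  qed
qed

lemma card_G:
  assumes "1 \<le> t"
  shows "card (G (2*t - 1)) = catalan t ^ 2"
proof -
  have "card (G (2*t - 1)) = card (P2 t)" using bij_betw_same_card[OF bij_Phi[OF assms]] by simp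
  also have "P2 t = {x. pstring t x} \<times> {x. pstring t x}" by (auto simp: P2_def)
  finally show ?thesis by (simp add: card_cartesian_product card_pstring power2_eq_square)
qed

lemma matched_adj: "matched xs a (Suc a) \<longleftrightarrow> 1 \<le> a \<and> Suc a \<le> length xs \<and> xs ! (a - 1) \<and> \<not> xs ! a"
  by (auto simp: matched_def balanced_def depth_def)

lemma num_pierced_occn:
  assumes "1 \<le> s" "(U, W) \<in> P2 s"
  shows "num_pierced s U W = occn (Phi (U, W))"
proof -
  have pU: "pstring s U" and pW: "pstring s W" using assms by (auto simp: P2_def)
  have lU: "length U = 2*s" and lW: "length W = 2*s" using pU pW by (auto simp: pstring_wk)
  let ?z = "Phi (U, W)"
  have lz: "length ?z = 2*s - 1" using lU lW by (simp add: Phi_def)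
  have "{i. 1 \<le> i \<and> i \<le> 2 * s - 2 \<and> pierced U W i} = Suc ` occset ?z"
  proof (rule set_eqI)
    fix i
    show "i \<in> {i. 1 \<le> i \<and> i \<le> 2 * s - 2 \<and> pierced U W i} \<longleftrightarrow> i \<in> Suc ` occset ?z"
    proof (cases i)
      case 0 then show ?thesis by auto
    next
      case (Suc j)
      have "i \<in> Suc ` occset ?z \<longleftrightarrow> j \<in> occset ?z" using Suc by auto
      also have "\<dots> \<longleftrightarrow> Suc j < 2*s - 1 \<and> U ! j \<and> W ! Suc j \<and> \<not> U ! Suc j \<and> \<not> W ! Suc (Suc j)"
        using lU lW lz
        by (auto simp: occset_def Phi_def nth_butlast nth_tl c1_def c2_def)
      also have "\<dots> \<longleftrightarrow> i \<in> {i. 1 \<le> i \<and> i \<le> 2 * s - 2 \<and> pierced U W i}"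
        using Suc lU lW assms(1)
        by (auto simp: pierced_def upper_arc_def lower_arc_def matched_adj)
      finally show ?thesis by simp
    qed
  qed
  then have "num_pierced s U W = card (Suc ` occset ?z)" by (simp add: num_pierced_def)
  also have "\<dots> = occn ?z" by (simp add: card_image card_occset)
  finally show ?thesis .
qed

lemma inversion:
  fixes j k s :: nat
  assumes "j \<le> s" "k \<le> s"
  shows "(\<Sum>m = k..s. (-1) ^ (m + k) * int (m choose k) * int (j choose m)) = (if j = k then 1 else 0)"
proof (cases "k \<le> j")
  case False
  have "(\<Sum>m = k..s. (-1) ^ (m + k) * int (m choose k) * int (j choose m)) = 0"
    by (rule sum.neutral) (use False in auto)
  then show ?thesis using False by simp
next
  case True
  have "(\<Sum>m = k..s. (-1) ^ (m + k) * int (m choose k) * int (j choose m))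
      = (\<Sum>m = k..j. (-1) ^ (m + k) * int (m choose k) * int (j choose m))"
    by (rule sum.mono_neutral_right) (use assms True in auto)
  also have "\<dots> = (\<Sum>m = k..j. int (j choose k) * ((-1) ^ (m - k) * int ((j - k) choose (m - k))))"
  proof (rule sum.cong)
    fix m assume m: "m \<in> {k..j}"
    have c: "(j choose m) * (m choose k) = (j choose k) * ((j - k) choose (m - k))"
      using m by (intro choose_mult) auto
    have p: "(-1::int) ^ (m + k) = (-1) ^ (m - k)"
    proof -
      obtain d where d: "m = k + d" using m le_Suc_ex by auto
      have "m + k = 2 * k + d" using d by simp
      then have "(-1::int) ^ (m + k) = (-1) ^ (2 * k + d)" by (rule arg_cong)
      also have "\<dots> = (-1) ^ d" by (simp add: power_add power_mult)
      finally show ?thesis by (simp add: d)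
    qed
    show "(-1) ^ (m + k) * int (m choose k) * int (j choose m) = int (j choose k) * ((-1) ^ (m - k) * int ((j - k) choose (m - k)))"
      using c p by (simp add: algebra_simps flip: of_nat_mult)
  qed simp
  also have "\<dots> = int (j choose k) * (\<Sum>m = k..j. (-1) ^ (m - k) * int ((j - k) choose (m - k)))"
    by (simp add: sum_distrib_left)
  also have "(\<Sum>m = k..j. (-1::int) ^ (m - k) * int ((j - k) choose (m - k))) = (\<Sum>i = 0..j - k. (-1) ^ i * int ((j - k) choose i))"
  proof -
    have "(\<Sum>i = 0..j - k. (-1::int) ^ i * int ((j - k) choose i)) = (\<Sum>m = 0 + k..(j - k) + k. (-1) ^ (m - k) * int ((j - k) choose (m - k)))"
      by (subst sum.shift_bounds_cl_nat_ivl) simp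
    then show ?thesis using True by simp
  qed
  also have "\<dots> = (if j = k then 1 else 0)"
  proof (cases "j = k")
    case True then show ?thesis by simp
  next
    case False
    then have "j - k > 0" using \<open>k \<le> j\<close> by simp
    from choose_alternating_sum[OF this, where 'a = int] show ?thesis using False by (simp add: atLeast0AtMost)
  qed
  finally show ?thesis by simp
qed

theorem lemma3p4:
  fixes s k :: nat
  assumes "1 \<le> s" and "k \<le> s"
  shows "int (Enum s k) = (\<Sum>m = k..s. (-1) ^ (m + k) * int (m choose k) * int (Onum s m))"
proof -
  let ?n = "2*s - 1"
  have bij: "bij_betw Phi (P2 s) (G ?n)" by (rule bij_Phi[OF assms(1)])
  have set1: "{(U, W). pstring s U \<and> pstring s W \<and> num_pierced s U W = k} = {p \<in> P2 s. occn (Phi p) = k}"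
    using num_pierced_occn[OF assms(1)] by (auto simp: P2_def)
  have "card {p \<in> P2 s. occn (Phi p) = k} = card (Phi ` {p \<in> P2 s. occn (Phi p) = k})"
    by (rule card_image[symmetric]) (rule inj_on_subset[OF bij_betw_imp_inj_on[OF bij]], auto)
  also have "Phi ` {p \<in> P2 s. occn (Phi p) = k} = {z \<in> G ?n. occn z = k}"
    using bij_betw_imp_surj_on[OF bij] by auto
  finally have E: "Enum s k = card {z \<in> G ?n. occn z = k}" by (simp add: Enum_def set1)
  have "int (card {z \<in> G ?n. occn z = k}) = (\<Sum>z\<in>G ?n. if occn z = k then 1 else 0)"
    by (simp add: finite_G sum.If_cases Int_def)
  also have "\<dots> = (\<Sum>z\<in>G ?n. \<Sum>m = k..s. (-1) ^ (m + k) * int (m choose k) * int (occn z choose m))"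
  proof (rule sum.cong)
    fix z assume "z \<in> G ?n"
    then have "occn z \<le> s" using occn_bound[of z] by (auto simp: G_def)
    then show "(if occn z = k then 1 else 0) = (\<Sum>m = k..s. (-1) ^ (m + k) * int (m choose k) * int (occn z choose m))"
      using inversion[of "occn z" s k] assms by simp
  qed simp
  also have "\<dots> = (\<Sum>m = k..s. (-1) ^ (m + k) * int (m choose k) * int (\<Sum>z\<in>G ?n. occn z choose m))"
    by (subst sum.swap) (simp add: sum_distrib_left)
  also have "\<dots> = (\<Sum>m = k..s. (-1) ^ (m + k) * int (m choose k) * int (Onum s m))"
  proof (rule sum.cong)
    fix m assume m: "m \<in> {k..s}"
    have "(\<Sum>z\<in>G ?n. occn z choose m) = Onum s m"
    proof (cases "m = s")
      case True
      have "(\<Sum>z\<in>G ?n. occn z choose m) = 0"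
      proof (rule sum.neutral, rule ballI)
        fix z assume "z \<in> G ?n"
        then have "occn z < m" using occn_bound[of z] True assms(1) by (auto simp: G_def)
        then show "occn z choose m = 0" by simp
      qed
      moreover have "Onum s m = 0" using True assms(1) by (simp add: Onum_def)
      ultimately show ?thesis by simp
    next
      case False
      then have ms: "m < s" using m by auto
      have "(\<Sum>z\<in>G ?n. occn z choose m) = card (G (?n - 2*m)) * ((?n - m) choose m)"
        by (rule N_lemma) (use ms in auto)
      moreover have "?n - 2*m = 2*(s - m) - 1" using ms by auto
      moreover have "card (G (2*(s - m) - 1)) = catalan (s - m) ^ 2" by (rule card_G) (use ms in auto)
      moreover have "?n - m = 2*s - m - 1" by simp
      ultimately show ?thesis by (simp add: Onum_def)
    qed
    then show "(-1) ^ (m + k) * int (m choose k) * int (\<Sum>z\<in>G ?n. occn z choose m) = (-1) ^ (m + k) * int (m choose k) * int (Onum s m)"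
      by simp
  qed simp
  finally show ?thesis using E by simp
qed

end
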